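(* Under the assumptions of Theorem 11 ($P_{XY}$ on $\mathcal X\times\mathcal Y$, $|\mathcal X|=M$, fixed list size $L<M$, list decoder $\mathcal L$, $P_{\mathcal L}=\mathbb P[X\notin\mathcal L(Y)]$): (a) $$H(X|Y)\le\log M-d\Big(P_{\mathcal L}\,\Big\|\,1-\frac LM\Big)-\frac{\log e}{2}\cdot\frac{\big(\mathbb E[P_{X|Y}(X|Y)]-\frac{1-P_{\mathcal L}}L-\frac{P_{\mathcal L}}{M-L}\big)^+}{\sup_{(x,y)}P_{X|Y}(x|y)};$$ (b) if the list decoder selects, for each $y$, the $L$ most probable elements of $\mathcal X$ given $Y=y$, then $$H(X|Y)\le\log M-d\Big(P_{\mathcal L}\,\Big\|\,1-\frac LM\Big)-\frac{\log e}{2}\cdot\frac{\big(\mathbb E[P_{X|Y}(X|Y)]-\frac{1-P_{\mathcal L}}L\big)^+}{\sup_{(x,y)}P_{X|Y}(x|y)}.$$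
   Context: Logarithms in an arbitrary fixed base, $\log e$ the logarithm of Euler's number in that base; $H(X|Y)$ is conditional Shannon entropy; $d(p\|q):=p\log\frac pq+(1-p)\log\frac{1-p}{1-q}$ is the binary relative entropy (continuously extended to $[0,1]^2$); $u^+:=\max\{u,0\}$. *)

theory Defs
  imports "HOL-Probability.Probability"
begin

text \<open>Conditional probability P_{X|Y}(x|y) = P_{XY}(x,y) / P_Y(y) (equal to 0 when P_Y(y) = 0).\<close>
definition condp :: "('a \<times> 'b) pmf \<Rightarrow> 'a \<Rightarrow> 'b \<Rightarrow> real" where
  "condp P x y = pmf P (x, y) / pmf (map_pmf snd P) y"

definition cond_entropy :: "real \<Rightarrow> ('a \<times> 'b) pmf \<Rightarrow> real" where
  "cond_entropy b P = measure_pmf.expectation P (\<lambda>(x, y). - log b (condp P x y))"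

text \<open>Binary relative entropy d(p||q) with the convention 0 log 0 = 0
  (its continuous extension, for q in the open interval (0,1)).\<close>
definition bin_rel_ent :: "real \<Rightarrow> real \<Rightarrow> real \<Rightarrow> real" where
  "bin_rel_ent b p q =
     (if p = 0 then 0 else p * log b (p / q)) +
     (if p = 1 then 0 else (1 - p) * log b ((1 - p) / (1 - q)))"

end

theory Submission
  imports Defs
begin
lemma nn_disint:
  fixes P :: "('a::finite \<times> 'b) pmf" and f :: "'a \<times> 'b \<Rightarrow> ennreal"
  shows "(\<integral>\<^sup>+z. f z \<partial>measure_pmf P) = (\<integral>\<^sup>+y. (\<Sum>x\<in>UNIV. ennreal (pmf P (x,y)) * f (x,y)) \<partial>count_space UNIV)"
proof -
  define g where "g z = ennreal (pmf P z) * f z" for z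
  have split: "g z = (\<Sum>x\<in>UNIV. g z * indicator (range (Pair x)) z)" for z
  proof -
    have "(\<Sum>x\<in>UNIV. g z * indicator (range (Pair x)) z) = (\<Sum>x\<in>{fst z}. g z * indicator (range (Pair x)) z)"
      by (rule sum.mono_neutral_right) (auto simp: indicator_def)
    also have "\<dots> = g z" by (cases z) (auto simp: indicator_def)
    finally show ?thesis by simp
  qed
  have "(\<integral>\<^sup>+z. f z \<partial>measure_pmf P) = (\<integral>\<^sup>+z. g z \<partial>count_space UNIV)"
    by (simp add: nn_integral_measure_pmf g_def)
  also have "\<dots> = (\<integral>\<^sup>+z. (\<Sum>x\<in>UNIV. g z * indicator (range (Pair x)) z) \<partial>count_space UNIV)"
    by (subst split) simp
  also have "\<dots> = (\<Sum>x\<in>UNIV. \<integral>\<^sup>+z. g z * indicator (range (Pair x)) z \<partial>count_space UNIV)"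
    by (rule nn_integral_sum) auto
  also have "\<dots> = (\<Sum>x\<in>UNIV. \<integral>\<^sup>+z. g z \<partial>count_space (range (Pair x)))"
    by (simp add: nn_integral_count_space_indicator)
  also have "\<dots> = (\<Sum>x\<in>UNIV. \<integral>\<^sup>+y. g (x,y) \<partial>count_space UNIV)"
  proof (rule sum.cong[OF refl])
    fix x :: 'a
    have "bij_betw (Pair x) (UNIV::'b set) (range (Pair x))"
      by (auto simp: bij_betw_def inj_on_def)
    from nn_integral_bij_count_space[OF this, of g]
    show "(\<integral>\<^sup>+z. g z \<partial>count_space (range (Pair x))) = (\<integral>\<^sup>+y. g (x,y) \<partial>count_space UNIV)"
      by simp
  qed
  also have "\<dots> = (\<integral>\<^sup>+y. (\<Sum>x\<in>UNIV. g (x,y)) \<partial>count_space UNIV)"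
    by (rule nn_integral_sum[symmetric]) auto
  finally show ?thesis by (simp add: g_def)
qed

lemma pmf_le_marg:
  fixes P :: "('a \<times> 'b) pmf"
  shows "pmf P (x,y) \<le> pmf (map_pmf snd P) y"
proof -
  have "pmf P (x,y) = measure P {(x,y)}" by (simp add: measure_pmf_single)
  also have "\<dots> \<le> measure P (snd -` {y})"
    by (rule measure_pmf.finite_measure_mono) auto
  finally show ?thesis by (simp add: pmf_map)
qed

lemma condp_le1: "condp P x y \<le> 1"
  unfolding condp_def using pmf_le_marg[of P x y]
  by (cases "pmf (map_pmf snd P) y = 0") (auto simp: divide_le_eq_1)

lemma condp_nonneg: "0 \<le> condp P x y"
  unfolding condp_def by simp

lemma pmf_eq_marg_condp: "pmf P (x,y) = pmf (map_pmf snd P) y * condp P x y"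
  unfolding condp_def using pmf_le_marg[of P x y]
  by (cases "pmf (map_pmf snd P) y = 0") auto

lemma key_nn:
  fixes P :: "('a::finite \<times> 'b) pmf" and k :: "'a \<Rightarrow> 'b \<Rightarrow> real"
  assumes k0: "\<And>x y. 0 \<le> k x y" and kC: "\<And>y. (\<Sum>x\<in>UNIV. k x y) \<le> C"
  shows "(\<integral>\<^sup>+z. ennreal (k (fst z) (snd z) / condp P (fst z) (snd z)) \<partial>measure_pmf P) \<le> ennreal C"
proof -
  have "(\<integral>\<^sup>+z. ennreal (k (fst z) (snd z) / condp P (fst z) (snd z)) \<partial>measure_pmf P)
     = (\<integral>\<^sup>+y. (\<Sum>x\<in>UNIV. ennreal (pmf P (x,y)) * ennreal (k x y / condp P x y)) \<partial>count_space UNIV)"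
    by (subst nn_disint) simp
  also have "\<dots> \<le> (\<integral>\<^sup>+y. ennreal (pmf (map_pmf snd P) y) * ennreal C \<partial>count_space UNIV)"
  proof (rule nn_integral_mono)
    fix y
    have "(\<Sum>x\<in>UNIV. ennreal (pmf P (x,y)) * ennreal (k x y / condp P x y))
        \<le> (\<Sum>x\<in>UNIV. ennreal (pmf (map_pmf snd P) y * k x y))"
    proof (rule sum_mono)
      fix x
      show "ennreal (pmf P (x,y)) * ennreal (k x y / condp P x y) \<le> ennreal (pmf (map_pmf snd P) y * k x y)"
      proof (cases "pmf P (x,y) = 0")
        case True thus ?thesis by simp
      next
        case False
        hence pos: "0 < pmf (map_pmf snd P) y" using pmf_le_marg[of P x y]
          by (metis order.strict_trans1 pmf_nonneg order_le_less)
        have "pmf P (x,y) * (k x y / condp P x y) = pmf (map_pmf snd P) y * k x y"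
          using False pos unfolding condp_def by (simp add: field_simps)
        have nnq: "0 \<le> k x y / condp P x y" using k0[of x y] condp_nonneg[of P x y] by simp
        have "ennreal (pmf P (x,y)) * ennreal (k x y / condp P x y) = ennreal (pmf P (x,y) * (k x y / condp P x y))"
          by (rule ennreal_mult''[OF nnq, symmetric])
        thus ?thesis using \<open>pmf P (x,y) * (k x y / condp P x y) = pmf (map_pmf snd P) y * k x y\<close> by simp
      qed
    qed
    also have "\<dots> = ennreal (\<Sum>x\<in>UNIV. pmf (map_pmf snd P) y * k x y)"
      using k0 by (subst sum_ennreal) auto
    also have "\<dots> \<le> ennreal (pmf (map_pmf snd P) y * C)"
      using kC[of y] by (auto intro!: ennreal_leI mult_left_mono simp: sum_distrib_left[symmetric])
    also have "\<dots> = ennreal (pmf (map_pmf snd P) y) * ennreal C"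
      by (rule ennreal_mult'[OF pmf_nonneg])
    finally show "(\<Sum>x\<in>UNIV. ennreal (pmf P (x,y)) * ennreal (k x y / condp P x y))
        \<le> ennreal (pmf (map_pmf snd P) y) * ennreal C" .
  qed
  also have "\<dots> = (\<integral>\<^sup>+y. ennreal C \<partial>measure_pmf (map_pmf snd P))"
    by (rule nn_integral_measure_pmf[symmetric])
  also have "\<dots> = ennreal C" by (simp add: measure_pmf.emeasure_space_1 nn_integral_const)
  finally show ?thesis .
qed

lemma key_real:
  fixes P :: "('a::finite \<times> 'b) pmf" and k :: "'a \<Rightarrow> 'b \<Rightarrow> real"
  assumes k0: "\<And>x y. 0 \<le> k x y" and kC: "\<And>y. (\<Sum>x\<in>UNIV. k x y) \<le> C"
  shows "integrable (measure_pmf P) (\<lambda>z. k (fst z) (snd z) / condp P (fst z) (snd z))"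
    and "measure_pmf.expectation P (\<lambda>z. k (fst z) (snd z) / condp P (fst z) (snd z)) \<le> C"
proof -
  have C0: "0 \<le> C" using kC[of undefined] k0 by (meson order.trans sum_nonneg)
  have nn: "0 \<le> k (fst z) (snd z) / condp P (fst z) (snd z)" for z
    by (rule divide_nonneg_nonneg[OF k0 condp_nonneg])
  show int: "integrable (measure_pmf P) (\<lambda>z. k (fst z) (snd z) / condp P (fst z) (snd z))"
  proof (intro integrableI_nonneg)
    show "AE z in measure_pmf P. 0 \<le> k (fst z) (snd z) / condp P (fst z) (snd z)" using nn by simp
    show "(\<integral>\<^sup>+z. ennreal (k (fst z) (snd z) / condp P (fst z) (snd z)) \<partial>measure_pmf P) < \<infinity>"
      by (rule order.strict_trans1[OF key_nn[of k C P, OF k0 kC]]) simp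
  qed simp
  have "ennreal (measure_pmf.expectation P (\<lambda>z. k (fst z) (snd z) / condp P (fst z) (snd z)))
     = (\<integral>\<^sup>+z. ennreal (k (fst z) (snd z) / condp P (fst z) (snd z)) \<partial>measure_pmf P)"
    using int nn by (intro nn_integral_eq_integral[symmetric]) auto
  also have "\<dots> \<le> ennreal C" by (rule key_nn[of k C P, OF k0 kC])
  finally show "measure_pmf.expectation P (\<lambda>z. k (fst z) (snd z) / condp P (fst z) (snd z)) \<le> C"
    using C0 by simp
qed
lemma ln_lower:
  fixes t \<beta> :: real
  assumes b1: "1 \<le> \<beta>" and t0: "0 < t" and tb: "t \<le> \<beta>"
  shows "1 - 1/t + (t - 2 + 1/t) / (2*\<beta>) \<le> ln t"
proof -
  define h where "h = (\<lambda>t::real. ln t - 1 + 1/t - (t - 2 + 1/t) / (2*\<beta>))"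
  have d: "DERIV h s :> ((s-1)/s^2 * (1 - (s+1)/(2*\<beta>)))" if "0 < s" for s
  proof -
    have "DERIV h s :> (1/s - 1/s^2 - (1 - 1/s^2)/(2*\<beta>))"
      unfolding h_def using that b1
      by (auto intro!: derivative_eq_intros simp: power2_eq_square field_simps)
    moreover have "1/s - 1/s^2 - (1 - 1/s^2)/(2*\<beta>) = (s-1)/s^2 * (1 - (s+1)/(2*\<beta>))"
      using that b1 by (simp add: power2_eq_square field_simps)
    ultimately show ?thesis by simp
  qed
  have "h 1 = 0" unfolding h_def by simp
  have "0 \<le> h t"
  proof (cases "1 \<le> t")
    case True
    have "h 1 \<le> h t"
    proof (rule DERIV_nonneg_imp_nondecreasing[OF True])
      fix s assume s: "1 \<le> s" "s \<le> t"
      have "(s+1)/(2*\<beta>) \<le> 1" using s tb b1 by (simp add: field_simps)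
      hence "0 \<le> (s-1)/s^2 * (1 - (s+1)/(2*\<beta>))" using s by simp
      thus "\<exists>y. DERIV h s :> y \<and> 0 \<le> y" using d[of s] s by auto
    qed
    thus ?thesis using \<open>h 1 = 0\<close> by simp
  next
    case False
    have "h 1 \<le> h t"
    proof (rule DERIV_nonpos_imp_nonincreasing[of t 1 h])
      show "t \<le> 1" using False by simp
      fix s assume s: "t \<le> s" "s \<le> 1"
      have "(s+1)/(2*\<beta>) \<le> 1" using s tb b1 by (simp add: field_simps)
      hence "(s-1)/s^2 * (1 - (s+1)/(2*\<beta>)) \<le> 0" using s t0
        by (intro mult_nonpos_nonneg) (auto simp: divide_nonpos_pos)
      thus "\<exists>y. DERIV h s :> y \<and> y \<le> 0" using d[of s] s t0 by auto
    qed
    thus ?thesis using \<open>h 1 = 0\<close> by simp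
  qed
  thus ?thesis unfolding h_def by simp
qed

lemma ln_lower2:
  fixes p q S :: real
  assumes "0 < p" "0 < q" "p \<le> S" "q \<le> S"
  shows "1 - q/p + (p - q)^2 / (2*S*p) \<le> ln p - ln q"
proof -
  have "1 - 1/(p/q) + (p/q - 2 + 1/(p/q)) / (2*(S/q)) \<le> ln (p/q)"
    using assms by (intro ln_lower) (auto simp: field_simps)
  moreover have "1 - 1/(p/q) + (p/q - 2 + 1/(p/q)) / (2*(S/q)) = 1 - q/p + (p - q)^2 / (2*S*p)"
    using assms by (simp add: field_simps power2_eq_square)
  ultimately show ?thesis using assms by (simp add: ln_div)
qed

lemma int_if:
  fixes P :: "('a \<times> 'b) pmf"
  shows "measure_pmf.expectation P (\<lambda>z. if fst z \<in> Ldec (snd z) then a else b)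
       = a * (1 - measure_pmf.prob P {(x, y). x \<notin> Ldec y}) + b * measure_pmf.prob P {(x, y). x \<notin> Ldec y}"
proof -
  define IN where "IN = {(x, y). x \<in> Ldec y}"
  have c: "{(x, y). x \<notin> Ldec y} = UNIV - IN" by (auto simp: IN_def)
  have f: "(\<lambda>z. if fst z \<in> Ldec (snd z) then a else b) = (\<lambda>z. a * indicator IN z + b * indicator (UNIV - IN) z)"
    by (auto simp: IN_def indicator_def fun_eq_iff)
  have "measure_pmf.prob P (UNIV - IN) = 1 - measure_pmf.prob P IN"
    using measure_pmf.prob_compl[of IN P] by simp
  thus ?thesis unfolding f c
    by (simp add: Bochner_Integration.integral_add measure_pmf.integrable_const_bound[where B=1])
qed

lemma sum_if_card:
  fixes A :: "'a::finite set"
  shows "(\<Sum>x\<in>UNIV. if x \<in> A then a else b) = real (card A) * a + (real CARD('a) - real (card A)) * b"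
proof -
  have "(\<Sum>x\<in>UNIV. if x \<in> A then a else b) = (\<Sum>x\<in>A. a) + (\<Sum>x\<in>-A. b)"
    by (simp add: sum.If_cases Int_absorb1 Compl_eq_Diff_UNIV)
  also have "\<dots> = real (card A) * a + real (card (-A)) * b" by simp
  also have "card (-A) = CARD('a) - card A" using card_Diff_subset[of A UNIV] by (simp add: Compl_eq_Diff_UNIV)
  finally show ?thesis using card_mono[of UNIV A] by (simp add: of_nat_diff)
qed
lemma emeasure_disint:
  fixes P :: "('a::finite \<times> 'b) pmf"
  shows "emeasure (measure_pmf P) S = (\<integral>\<^sup>+y. ennreal (\<Sum>x\<in>UNIV. pmf P (x,y) * indicator S (x,y)) \<partial>count_space UNIV)"
proof -
  have "emeasure (measure_pmf P) S = (\<integral>\<^sup>+z. indicator S z \<partial>measure_pmf P)" by simp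
  also have "\<dots> = (\<integral>\<^sup>+y. (\<Sum>x\<in>UNIV. ennreal (pmf P (x,y)) * indicator S (x,y)) \<partial>count_space UNIV)"
    by (rule nn_disint)
  also have "\<dots> = (\<integral>\<^sup>+y. ennreal (\<Sum>x\<in>UNIV. pmf P (x,y) * indicator S (x,y)) \<partial>count_space UNIV)"
  proof (rule nn_integral_cong)
    fix y
    have "(\<Sum>x\<in>UNIV. ennreal (pmf P (x,y)) * indicator S (x,y)) = (\<Sum>x\<in>UNIV. ennreal (pmf P (x,y) * indicator S (x,y)))"
      by (rule sum.cong) (auto simp: indicator_def)
    also have "\<dots> = ennreal (\<Sum>x\<in>UNIV. pmf P (x,y) * indicator S (x,y))"
      by (rule sum_ennreal) auto
    finally show "(\<Sum>x\<in>UNIV. ennreal (pmf P (x,y)) * indicator S (x,y)) = ennreal (\<Sum>x\<in>UNIV. pmf P (x,y) * indicator S (x,y))" .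
  qed
  finally show ?thesis .
qed

lemma order_PL:
  fixes P :: "('a::finite \<times> 'b) pmf"
  assumes card: "\<And>y. card (Ldec y) = L"
   and ord: "\<forall>y. \<forall>x\<in>Ldec y. \<forall>x'. x' \<notin> Ldec y \<longrightarrow> condp P x' y \<le> condp P x y"
  shows "real L * measure_pmf.prob P {(x,y). x \<notin> Ldec y}
     \<le> (real CARD('a) - real L) * (1 - measure_pmf.prob P {(x,y). x \<notin> Ldec y})"
proof -
  define OUT where "OUT = {(x::'a,y::'b). x \<notin> Ldec y}"
  define IN where "IN = {(x::'a,y::'b). x \<in> Ldec y}"
  define A where "A y = (\<Sum>x\<in>Ldec y. pmf P (x,y))" for y
  define B where "B y = (\<Sum>x\<in>-Ldec y. pmf P (x,y))" for y
  have cardc: "real (card (- Ldec y)) = real CARD('a) - real L" for y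
    using card_Diff_subset[of "Ldec y" UNIV] card_mono[of UNIV "Ldec y"] card[of y]
    by (simp add: Compl_eq_Diff_UNIV of_nat_diff)
  have eB: "(\<Sum>x\<in>UNIV. pmf P (x,y) * indicator OUT (x,y)) = B y" for y
  proof -
    have "(\<Sum>x\<in>UNIV. pmf P (x,y) * indicator OUT (x,y)) = (\<Sum>x\<in>UNIV. if x \<in> Ldec y then 0 else pmf P (x,y))"
      by (rule sum.cong) (auto simp: OUT_def indicator_def)
    thus ?thesis by (simp add: sum.If_cases B_def Compl_eq_Diff_UNIV)
  qed
  have eA: "(\<Sum>x\<in>UNIV. pmf P (x,y) * indicator IN (x,y)) = A y" for y
  proof -
    have "(\<Sum>x\<in>UNIV. pmf P (x,y) * indicator IN (x,y)) = (\<Sum>x\<in>UNIV. if x \<in> Ldec y then pmf P (x,y) else 0)"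
      by (rule sum.cong) (auto simp: IN_def indicator_def)
    thus ?thesis by (simp add: sum.If_cases A_def)
  qed
  have pw: "real L * B y \<le> (real CARD('a) - real L) * A y" for y
  proof -
    have le: "pmf P (x',y) \<le> pmf P (x,y)" if "x \<in> Ldec y" "x' \<notin> Ldec y" for x x'
      using ord that by (simp add: pmf_eq_marg_condp[of P x' y] pmf_eq_marg_condp[of P x y] mult_left_mono)
    have "real L * B y = (\<Sum>x\<in>Ldec y. \<Sum>x'\<in>-Ldec y. pmf P (x',y))"
      by (simp add: B_def card)
    also have "\<dots> \<le> (\<Sum>x\<in>Ldec y. \<Sum>x'\<in>-Ldec y. pmf P (x,y))"
      by (intro sum_mono) (auto intro: le)
    also have "\<dots> = (real CARD('a) - real L) * A y"
      by (simp add: A_def cardc sum_distrib_left mult.commute)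
    finally show ?thesis .
  qed
  have PLo: "measure_pmf.prob P OUT = 1 - measure_pmf.prob P IN"
  proof -
    have "OUT = UNIV - IN" by (auto simp: OUT_def IN_def)
    thus ?thesis using measure_pmf.prob_compl[of IN P] by simp
  qed
  have M0: "0 \<le> real CARD('a) - real L" using card_mono[of UNIV "Ldec undefined"] card by simp
  have "ennreal (real L * measure_pmf.prob P OUT) = ennreal (real L) * emeasure (measure_pmf P) OUT"
    by (simp add: measure_pmf.emeasure_eq_measure ennreal_mult)
  also have "\<dots> = (\<integral>\<^sup>+y. ennreal (real L) * ennreal (B y) \<partial>count_space UNIV)"
    by (simp add: emeasure_disint eB nn_integral_cmult)
  also have "\<dots> \<le> (\<integral>\<^sup>+y. ennreal (real CARD('a) - real L) * ennreal (A y) \<partial>count_space UNIV)"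
  proof (rule nn_integral_mono)
    fix y
    have "0 \<le> B y" "0 \<le> A y" by (auto simp: A_def B_def sum_nonneg)
    thus "ennreal (real L) * ennreal (B y) \<le> ennreal (real CARD('a) - real L) * ennreal (A y)"
      using pw[of y] M0 by (simp add: ennreal_mult[symmetric] ennreal_leI)
  qed
  also have "\<dots> = ennreal (real CARD('a) - real L) * emeasure (measure_pmf P) IN"
    by (simp add: emeasure_disint eA nn_integral_cmult)
  also have "\<dots> = ennreal ((real CARD('a) - real L) * (1 - measure_pmf.prob P OUT))"
    using M0 by (simp add: measure_pmf.emeasure_eq_measure ennreal_mult PLo)
  finally show ?thesis unfolding OUT_def
    using M0 by (subst (asm) ennreal_le_iff) (auto simp: PLo[unfolded OUT_def] intro!: mult_nonneg_nonneg)
qed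

theorem corollary5:
  fixes b :: real and P :: "('a::finite \<times> 'b) pmf"
    and L :: nat and Ldec :: "'b \<Rightarrow> 'a set"
  assumes b: "1 < b"
    and L_pos: "0 < L" and L_lt: "L < CARD('a)"
    and list_size: "\<And>y. card (Ldec y) = L"
  defines "M \<equiv> real CARD('a)"
    and "PL \<equiv> measure_pmf.prob P {(x, y). x \<notin> Ldec y}"
    and "EP \<equiv> measure_pmf.expectation P (\<lambda>(x, y). condp P x y)"
    and "Smax \<equiv> (SUP xy. condp P (fst xy) (snd xy))"
  shows
    "cond_entropy b P \<le> log b M - bin_rel_ent b PL (1 - real L / M)
        - log b (exp 1) / 2 *
          (max (EP - (1 - PL) / real L - PL / (M - real L)) 0 / Smax)
     \<and>
     ((\<forall>y. \<forall>x\<in>Ldec y. \<forall>x'. x' \<notin> Ldec y \<longrightarrow> condp P x' y \<le> condp P x y) \<longrightarrow>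
      cond_entropy b P \<le> log b M - bin_rel_ent b PL (1 - real L / M)
        - log b (exp 1) / 2 *
          (max (EP - (1 - PL) / real L) 0 / Smax))"
proof -
  define c where "c = ln b"
  have c0: "0 < c" using b by (simp add: c_def)
  define p where "p z = condp P (fst z) (snd z)" for z
  define qi where "qi = (1 - PL) / real L"
  define qo where "qo = PL / (M - real L)"
  define q where "q z = (if fst z \<in> Ldec (snd z) then qi else qo)" for z
  define lnq where "lnq z = (if fst z \<in> Ldec (snd z) then ln qi else ln qo)" for z
  define S where "S = Smax"
  have LltM: "real L < M" using L_lt by (simp add: M_def)
  have Lp: "0 < real L" using L_pos by simp
  have PL0: "0 \<le> PL" "PL \<le> 1" by (simp_all add: PL_def)
  have qi0: "0 \<le> qi" using PL0 Lp by (simp add: qi_def)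
  have qo0: "0 \<le> qo" using PL0 LltM by (simp add: qo_def)
  have sumq: "(\<Sum>x\<in>UNIV. if x \<in> Ldec y then a else a') = real L * a + (M - real L) * a'" for y a a'
    using sum_if_card[of "Ldec y" a a'] by (simp add: list_size M_def)
  have Lqi: "real L * qi = 1 - PL" using Lp by (simp add: qi_def)
  have Mqo: "(M - real L) * qo = PL" using LltM by (simp add: qo_def)
  have EP_def': "EP = measure_pmf.expectation P p"
    unfolding EP_def p_def by (simp add: case_prod_beta')
  have bdd: "bdd_above (range p)" unfolding p_def
    by (rule bdd_aboveI[of _ 1]) (auto simp: condp_le1)
  have pS: "p z \<le> S" for z unfolding S_def Smax_def
    using cSUP_upper[OF UNIV_I bdd, of z] by (simp add: p_def)
  have p0: "0 \<le> p z" for z by (simp add: p_def condp_nonneg)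
  have p1: "p z \<le> 1" for z by (simp add: p_def condp_le1)
  have psupp: "0 < p z" if "z \<in> set_pmf P" for z
  proof -
    obtain x y where z: "z = (x,y)" by (cases z)
    have a: "0 < pmf P (x,y)" using that z by (simp add: pmf_positive)
    hence "0 < pmf (map_pmf snd P) y" using pmf_le_marg[of P x y] by linarith
    thus ?thesis using a z by (simp add: p_def condp_def)
  qed
  have S0: "0 < S"
  proof -
    obtain z where "z \<in> set_pmf P" using set_pmf_not_empty[of P] by blast
    thus ?thesis using psupp pS by (meson less_le_trans)
  qed
  have intp: "integrable (measure_pmf P) p"
    by (rule measure_pmf.integrable_const_bound[where B=1]) (auto simp: p0 p1)
  have EPS: "EP \<le> S"
  proof -
    have "EP \<le> measure_pmf.expectation P (\<lambda>_. S)"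
      unfolding EP_def' by (rule integral_mono[OF intp]) (auto simp: pS)
    thus ?thesis by simp
  qed
  have qsupp: "0 < q z" if "z \<in> set_pmf P" for z
  proof -
    have pz: "0 < pmf P z" using that by (simp add: pmf_positive)
    show ?thesis
    proof (cases "fst z \<in> Ldec (snd z)")
      case True
      have "pmf P z \<le> measure_pmf.prob P {(x, y). x \<in> Ldec y}"
        using True measure_pmf.finite_measure_mono[of "{z}" "{(x, y). x \<in> Ldec y}" P]
        by (cases z) (auto simp: measure_pmf_single)
      moreover have "measure_pmf.prob P {(x, y). x \<in> Ldec y} = 1 - PL"
        using measure_pmf.prob_compl[of "{(x, y). x \<in> Ldec y}" P] unfolding PL_def
        by (simp add: set_diff_eq case_prod_beta')
      ultimately have "0 < 1 - PL" using pz by simp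
      thus ?thesis using True Lp by (simp add: q_def qi_def)
    next
      case False
      have "pmf P z \<le> PL"
        using False measure_pmf.finite_measure_mono[of "{z}" "{(x, y). x \<notin> Ldec y}" P]
        unfolding PL_def by (cases z) (auto simp: measure_pmf_single)
      thus ?thesis using False pz LltM by (simp add: q_def qo_def)
    qed
  qed
  have intinv: "integrable (measure_pmf P) (\<lambda>z. 1 / p z)"
    using key_real(1)[of "\<lambda>x y. 1" "M" P] by (simp add: p_def M_def)
  have intlnp: "integrable (measure_pmf P) (\<lambda>z. ln (p z))"
  proof (rule Bochner_Integration.integrable_bound[OF intinv])
    show "AE z in measure_pmf P. norm (ln (p z)) \<le> norm (1 / p z)"
    proof (rule AE_pmfI)
      fix z assume z: "z \<in> set_pmf P"
      have "ln (1 / p z) \<le> 1 / p z - 1" using psupp[OF z] by (intro ln_le_minus_one) simp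
      moreover have "ln (p z) \<le> 0" using psupp[OF z] p1[of z] by simp
      ultimately show "norm (ln (p z)) \<le> norm (1 / p z)" using psupp[OF z] by (simp add: ln_div)
    qed
  qed simp
  have intlnq: "integrable (measure_pmf P) lnq"
    by (rule measure_pmf.integrable_const_bound[where B="\<bar>ln qi\<bar> + \<bar>ln qo\<bar>"]) (auto simp: lnq_def)
  have intq: "integrable (measure_pmf P) q"
    by (rule measure_pmf.integrable_const_bound[where B="qi + qo"]) (auto simp: q_def qi0 qo0)
  have Elnq: "measure_pmf.expectation P lnq = (1 - PL) * ln qi + PL * ln qo"
    using int_if[of P Ldec "ln qi" "ln qo"] unfolding lnq_def PL_def by (simp add: mult.commute)
  have Eq: "measure_pmf.expectation P q = (1 - PL) * qi + PL * qo"
    using int_if[of P Ldec qi qo] unfolding q_def PL_def by (simp add: mult.commute)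
  define D where "D = measure_pmf.expectation P (\<lambda>z. ln (p z)) - measure_pmf.expectation P lnq"
  have Dint: "D = measure_pmf.expectation P (\<lambda>z. ln (p z) - lnq z)"
    unfolding D_def using intlnp intlnq by simp
  have lnqs: "lnq z = ln (q z)" for z by (simp add: lnq_def q_def)
  have D0: "0 \<le> D"
  proof -
    have k1: "integrable (measure_pmf P) (\<lambda>z. q z / p z)"
      "measure_pmf.expectation P (\<lambda>z. q z / p z) \<le> 1"
      using key_real[of "\<lambda>x y. if x \<in> Ldec y then qi else qo" 1 P] qi0 qo0
      by (auto simp: q_def p_def sumq Lqi Mqo if_distrib cong: if_cong)
    have "measure_pmf.expectation P (\<lambda>z. 1 - q z / p z) \<le> D"
      unfolding Dint
    proof (rule integral_mono_AE)
      show "integrable (measure_pmf P) (\<lambda>z. 1 - q z / p z)" using k1 by simp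
      show "integrable (measure_pmf P) (\<lambda>z. ln (p z) - lnq z)" using intlnp intlnq by simp
      show "AE z in measure_pmf P. 1 - q z / p z \<le> ln (p z) - lnq z"
      proof (rule AE_pmfI)
        fix z assume z: "z \<in> set_pmf P"
        have "ln (q z / p z) \<le> q z / p z - 1" using psupp[OF z] qsupp[OF z] by (intro ln_le_minus_one) simp
        thus "1 - q z / p z \<le> ln (p z) - lnq z" using psupp[OF z] qsupp[OF z] by (simp add: ln_div lnqs)
      qed
    qed
    moreover have "measure_pmf.expectation P (\<lambda>z. 1 - q z / p z) = 1 - measure_pmf.expectation P (\<lambda>z. q z / p z)"
      using k1 by simp
    ultimately show ?thesis using k1 by simp
  qed
  have D1: "(EP - ((1 - PL) * qi + PL * qo)) / (2 * S) \<le> D" if qiS: "qi \<le> S" and qoS: "qo \<le> S"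
  proof -
    define k where "k z = q z - (q z)^2 / (2*S)" for z
    have k1: "integrable (measure_pmf P) (\<lambda>z. k z / p z)"
      "measure_pmf.expectation P (\<lambda>z. k z / p z) \<le> 1 - ((1 - PL) * qi + PL * qo) / (2*S)"
    proof -
      let ?k = "\<lambda>x y. if x \<in> Ldec y then qi - qi^2/(2*S) else qo - qo^2/(2*S)"
      have knn: "0 \<le> ?k x y" for x y
      proof -
        have A: "qi^2/(2*S) \<le> qi"
        proof -
          have "qi*qi \<le> S*qi" using mult_right_mono[OF qiS qi0] .
          moreover have "0 \<le> S*qi" using S0 qi0 by simp
          ultimately have "qi*qi \<le> (2*S)*qi" by linarith
          thus ?thesis using S0 by (simp add: power2_eq_square divide_le_eq mult.commute mult.left_commute)
        qed
        have B: "qo^2/(2*S) \<le> qo"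
        proof -
          have "qo*qo \<le> S*qo" using mult_right_mono[OF qoS qo0] .
          moreover have "0 \<le> S*qo" using S0 qo0 by simp
          ultimately have "qo*qo \<le> (2*S)*qo" by linarith
          thus ?thesis using S0 by (simp add: power2_eq_square divide_le_eq mult.commute mult.left_commute)
        qed
        from A B
        show ?thesis by simp
      qed
      have ks: "(\<Sum>x\<in>UNIV. ?k x y) = 1 - ((1 - PL) * qi + PL * qo) / (2*S)" for y
      proof -
        have "(\<Sum>x\<in>UNIV. ?k x y) = real L * (qi - qi^2/(2*S)) + (M - real L) * (qo - qo^2/(2*S))"
          by (rule sumq)
        also have "\<dots> = real L * qi - (real L * qi) * qi / (2*S) + ((M - real L) * qo - ((M - real L) * qo) * qo / (2*S))"
          by (simp add: algebra_simps power2_eq_square)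
        also have "\<dots> = 1 - ((1 - PL) * qi + PL * qo) / (2*S)"
          unfolding Lqi Mqo using S0 by (simp add: field_simps)
        finally show ?thesis .
      qed
      have eqk: "(\<lambda>z. k z / p z) = (\<lambda>z. ?k (fst z) (snd z) / condp P (fst z) (snd z))"
        by (auto simp: k_def q_def p_def fun_eq_iff)
      show "integrable (measure_pmf P) (\<lambda>z. k z / p z)"
        unfolding eqk by (rule key_real(1)[of ?k "1 - ((1 - PL) * qi + PL * qo) / (2*S)", OF knn]) (simp add: ks)
      show "measure_pmf.expectation P (\<lambda>z. k z / p z) \<le> 1 - ((1 - PL) * qi + PL * qo) / (2*S)"
        unfolding eqk by (rule key_real(2)[of ?k, OF knn]) (simp add: ks)
    qed
    define R where "R z = 1 + p z / (2*S) - q z / S - k z / p z" for z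
    have intR: "integrable (measure_pmf P) R"
      unfolding R_def using k1(1) intp intq by simp
    have ER: "measure_pmf.expectation P R = 1 + EP / (2*S) - ((1 - PL) * qi + PL * qo) / S - measure_pmf.expectation P (\<lambda>z. k z / p z)"
      unfolding R_def EP_def' using k1(1) intp intq by (simp add: Eq)
    have "measure_pmf.expectation P R \<le> D"
      unfolding Dint
    proof (rule integral_mono_AE[OF intR])
      show "integrable (measure_pmf P) (\<lambda>z. ln (p z) - lnq z)" using intlnp intlnq by simp
      show "AE z in measure_pmf P. R z \<le> ln (p z) - lnq z"
      proof (rule AE_pmfI)
        fix z assume z: "z \<in> set_pmf P"
        have qS: "q z \<le> S" using qiS qoS by (simp add: q_def)
        have "1 - q z / p z + (p z - q z)^2 / (2*S*p z) \<le> ln (p z) - ln (q z)"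
          by (rule ln_lower2) (use psupp[OF z] qsupp[OF z] pS qS in auto)
        moreover have "R z = 1 - q z / p z + (p z - q z)^2 / (2*S*p z)"
          unfolding R_def k_def using psupp[OF z] S0 by (simp add: field_simps power2_eq_square)
        ultimately show "R z \<le> ln (p z) - lnq z" by (simp add: lnqs)
      qed
    qed
    hence "1 + EP / (2*S) - ((1 - PL) * qi + PL * qo) / S - (1 - ((1 - PL) * qi + PL * qo) / (2*S)) \<le> D"
      using ER k1(2) by linarith
    moreover have "1 + EP / (2*S) - ((1 - PL) * qi + PL * qo) / S - (1 - ((1 - PL) * qi + PL * qo) / (2*S))
       = (EP - ((1 - PL) * qi + PL * qo)) / (2 * S)"
      using S0 by (simp add: diff_divide_distrib)
    ultimately show ?thesis by linarith
  qed
  have CE: "cond_entropy b P = - measure_pmf.expectation P (\<lambda>z. ln (p z)) / c"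
    unfolding cond_entropy_def log_def c_def p_def by (simp add: case_prod_beta')
  have BR: "bin_rel_ent b PL (1 - real L / M) = ((1 - PL) * (ln qi + ln M) + PL * (ln qo + ln M)) / c"
  proof -
    have e1: "PL / (1 - real L / M) = qo * M" using LltM Lp by (simp add: qo_def field_simps)
    have e2: "(1 - PL) / (1 - (1 - real L / M)) = qi * M" using LltM Lp by (simp add: qi_def field_simps)
    have Mp: "0 < M" using LltM Lp by simp
    have t1: "(if PL = 0 then 0 else PL * log b (PL / (1 - real L / M))) = PL * (ln qo + ln M) / c"
    proof (cases "PL = 0")
      case False
      hence "0 < qo" using PL0 LltM by (simp add: qo_def)
      have "log b (PL / (1 - real L / M)) = log b (qo * M)" by (simp only: e1)
      also have "\<dots> = (ln qo + ln M) / c" using \<open>0 < qo\<close> Mp by (simp add: log_def c_def ln_mult)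
      finally show ?thesis using False by simp
    qed simp
    have t2: "(if PL = 1 then 0 else (1 - PL) * log b ((1 - PL) / (1 - (1 - real L / M)))) = (1 - PL) * (ln qi + ln M) / c"
    proof (cases "PL = 1")
      case False
      hence "0 < qi" using PL0 Lp by (simp add: qi_def)
      have "log b ((1 - PL) / (1 - (1 - real L / M))) = log b (qi * M)" by (simp only: e2)
      also have "\<dots> = (ln qi + ln M) / c" using \<open>0 < qi\<close> Mp by (simp add: log_def c_def ln_mult)
      finally show ?thesis using False by simp
    qed simp
    show ?thesis unfolding bin_rel_ent_def t1 t2 by (simp add: add_divide_distrib)
  qed
  have LE: "log b (exp 1) = 1 / c" by (simp add: log_def c_def)
  have LM: "log b M = ln M / c" by (simp add: log_def c_def)
  have final: "cond_entropy b P \<le> log b M - bin_rel_ent b PL (1 - real L / M) - log b (exp 1) / 2 * (m / Smax)"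
    if "m / (2*S) \<le> D" for m
  proof -
    have "log b M - bin_rel_ent b PL (1 - real L / M) - log b (exp 1) / 2 * (m / Smax) - cond_entropy b P
        = (D - m / (2*S)) / c"
      unfolding CE BR LE LM D_def Elnq S_def using c0 by (simp add: field_simps)
    moreover have "0 \<le> (D - m / (2*S)) / c" using that c0 by simp
    ultimately show ?thesis by linarith
  qed
  show ?thesis
  proof
    show "cond_entropy b P \<le> log b M - bin_rel_ent b PL (1 - real L / M)
        - log b (exp 1) / 2 * (max (EP - (1 - PL) / real L - PL / (M - real L)) 0 / Smax)"
    proof (rule final)
      show "max (EP - (1 - PL) / real L - PL / (M - real L)) 0 / (2*S) \<le> D"
      proof (cases "EP - qi - qo \<le> 0")
        case True thus ?thesis using D0 by (simp add: qi_def qo_def)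
      next
        case False
        hence "qi \<le> S" "qo \<le> S" using EPS qi0 qo0 by linarith+
        note D1[OF this]
        moreover have "(1 - PL) * qi + PL * qo \<le> qi + qo"
          using PL0 qi0 qo0 by (smt (verit) mult_left_le_one_le)
        ultimately have "(EP - qi - qo) / (2*S) \<le> D" using S0
          by (smt (verit) divide_right_mono)
        thus ?thesis using False by (simp add: qi_def qo_def)
      qed
    qed
    show "(\<forall>y. \<forall>x\<in>Ldec y. \<forall>x'. x' \<notin> Ldec y \<longrightarrow> condp P x' y \<le> condp P x y) \<longrightarrow>
      cond_entropy b P \<le> log b M - bin_rel_ent b PL (1 - real L / M)
        - log b (exp 1) / 2 * (max (EP - (1 - PL) / real L) 0 / Smax)"
    proof
      assume ord: "\<forall>y. \<forall>x\<in>Ldec y. \<forall>x'. x' \<notin> Ldec y \<longrightarrow> condp P x' y \<le> condp P x y"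
      have oq: "qo \<le> qi"
      proof -
        have "real L * PL \<le> (M - real L) * (1 - PL)"
          using order_PL[OF list_size ord] unfolding PL_def M_def .
        thus ?thesis using Lp LltM by (simp add: qi_def qo_def field_simps)
      qed
      show "cond_entropy b P \<le> log b M - bin_rel_ent b PL (1 - real L / M)
        - log b (exp 1) / 2 * (max (EP - (1 - PL) / real L) 0 / Smax)"
      proof (rule final)
        show "max (EP - (1 - PL) / real L) 0 / (2*S) \<le> D"
        proof (cases "EP - qi \<le> 0")
          case True thus ?thesis using D0 by (simp add: qi_def)
        next
          case False
          hence "qi \<le> S" "qo \<le> S" using EPS oq by linarith+
          note D1[OF this]
          moreover have "(1 - PL) * qi + PL * qo \<le> qi"
            using mult_left_mono[OF oq PL0(1)] by (simp add: algebra_simps)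
          ultimately have "(EP - qi) / (2*S) \<le> D" using S0
            by (smt (verit) divide_right_mono)
          thus ?thesis using False by (simp add: qi_def)
        qed
      qed
    qed
  qed
qed
end
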